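(* Let $f(x)=x^5+px^4+qx^3+rx^2+sx+t$ with $p,q,r,s,t\in\mathbb{R}$, and let $D$, $L_3$, $L_2$, $L_1$ be as in the context. Then: (1) $f$ has five distinct real roots if and only if $L_3>0$, $L_2>0$, $L_1>0$ and $D>0$; (2) $f$ has three distinct real roots and a pair of (non-real) complex conjugate roots if and only if $D<0$; (3) $f$ has exactly one real root and four distinct non-real roots (two distinct pairs of complex conjugate roots) if and only if $D>0$ and ($L_3\le 0$ or $L_2\le 0$ or $L_1\le 0$).
   Context: Let $\alpha_1,\dots,\alpha_5\in\mathbb{C}$ be the roots of $f$ listed with multiplicity. $D=\prod_{1\le i<j\le 5}(\alpha_i-\alpha_j)^2$ is the discriminant of $f$ (a polynomial in $p,q,r,s,t$). $L_3=2p^2-5q$. $L_2=40qs-16p^2s-8rp^3+38rpq+3p^2q^2-12q^3-45r^2$. $L_1=-264ps^2r-12p^3tq^2+36r^3pq-124srpq^2+28srp^3q+260sptq-132p^2qrt+240pr^2t+234sqr^2+32p^4tr+48ptq^3-56sp^3t-80q^2rt+194qs^2p^2-600str-6q^3sp^2+2p^2q^2r^2-12sr^2p^2-54r^4+320s^3-8q^3r^2-8r^3p^3+250qt^2-176q^2s^2+24q^4s-36p^4s^2-100p^2t^2$. ($L_3,L_2,L_1$ are, up to positive factors, the leading coefficients of the degree 3, 2, 1 remainders in the Sturm sequence of $f$.) *)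

theory Defs
  imports "HOL-Computational_Algebra.Polynomial" Complex_Main
begin

definition quintic :: "real \<Rightarrow> real \<Rightarrow> real \<Rightarrow> real \<Rightarrow> real \<Rightarrow> real poly" where
  "quintic p q r s t = [:t, s, r, q, p, 1:]"

definition root_disc :: "complex list \<Rightarrow> complex" where
  "root_disc xs = (\<Prod>i<length xs. \<Prod>j\<in>{i<..<length xs}. (xs ! i - xs ! j)^2)"

definition quintic_roots :: "real \<Rightarrow> real \<Rightarrow> real \<Rightarrow> real \<Rightarrow> real \<Rightarrow> complex list" where
  "quintic_roots p q r s t = (SOME xs. map_poly complex_of_real (quintic p q r s t)
        = (\<Prod>x\<leftarrow>xs. [:- x, 1:]))"

text \<open>D is real; we take the real part of the (real) complex number.\<close>
definition quintic_disc :: "real \<Rightarrow> real \<Rightarrow> real \<Rightarrow> real \<Rightarrow> real \<Rightarrow> real" where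
  "quintic_disc p q r s t = Re (root_disc (quintic_roots p q r s t))"

definition L3 :: "real \<Rightarrow> real \<Rightarrow> real \<Rightarrow> real \<Rightarrow> real \<Rightarrow> real" where
  "L3 p q r s t = 2*p^2 - 5*q"

definition L2 :: "real \<Rightarrow> real \<Rightarrow> real \<Rightarrow> real \<Rightarrow> real \<Rightarrow> real" where
  "L2 p q r s t = 40*q*s - 16*p^2*s - 8*r*p^3 + 38*r*p*q + 3*p^2*q^2 - 12*q^3 - 45*r^2"

definition L1 :: "real \<Rightarrow> real \<Rightarrow> real \<Rightarrow> real \<Rightarrow> real \<Rightarrow> real" where
  "L1 p q r s t = -264*p*s^2*r - 12*p^3*t*q^2 + 36*r^3*p*q - 124*s*r*p*q^2 + 28*s*r*p^3*q
     + 260*s*p*t*q - 132*p^2*q*r*t + 240*p*r^2*t + 234*s*q*r^2 + 32*p^4*t*r + 48*p*t*q^3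
     - 56*s*p^3*t - 80*q^2*r*t + 194*q*s^2*p^2 - 600*s*t*r - 6*q^3*s*p^2 + 2*p^2*q^2*r^2
     - 12*s*r^2*p^2 - 54*r^4 + 320*s^3 - 8*q^3*r^2 - 8*r^3*p^3 + 250*q*t^2 - 176*q^2*s^2
     + 24*q^4*s - 36*p^4*s^2 - 100*p^2*t^2"

definition real_roots :: "real poly \<Rightarrow> real set" where
  "real_roots f = {x. poly f x = 0}"

definition nonreal_roots :: "real poly \<Rightarrow> complex set" where
  "nonreal_roots f = {z. poly (map_poly complex_of_real f) z = 0 \<and> Im z \<noteq> 0}"

end

theory Submission
  imports Defs "HOL-Computational_Algebra.Fundamental_Theorem_Algebra"
begin


lemma deg_lin_prod: "degree (\<Prod>x\<leftarrow>xs. [:-x,1::'a::idom:]) = length xs"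
proof (induction xs)
  case (Cons a xs)
  have "(\<Prod>x\<leftarrow>xs. [:-x,1::'a:]) \<noteq> 0" by (auto simp: prod_list_zero_iff)
  then have "degree ([:-a,1:] * (\<Prod>x\<leftarrow>xs. [:-x,1::'a:])) = Suc (length xs)"
    using Cons by (subst degree_mult_eq) auto
  then show ?case by simp
qed simp

lemma fc_eq: "map_poly complex_of_real (quintic p q r s t) =
   [:of_real t, of_real s, of_real r, of_real q, of_real p, 1:]"
  unfolding quintic_def by (simp add: map_poly_pCons)

lemma rootlist_ex: "\<exists>xs. map_poly complex_of_real (quintic p q r s t) = (\<Prod>x\<leftarrow>xs. [:-x,1:])"
proof -
  let ?f = "map_poly complex_of_real (quintic p q r s t)"
  have nz: "?f \<noteq> 0" by (simp add: fc_eq)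
  have lc: "lead_coeff ?f = 1" by (simp add: fc_eq)
  obtain A where A: "?f = smult (lead_coeff ?f) (\<Prod>x\<in>#A. [:-x, 1:])"
    using alg_closed_imp_factorization[OF nz] by blast
  obtain xs where xs: "mset xs = A" using ex_mset by blast
  have "(\<Prod>x\<in>#A. [:-x, 1:]) = (\<Prod>x\<leftarrow>xs. [:-x,1:])"
    unfolding xs[symmetric] by (simp add: prod_mset_prod_list flip: mset_map)
  with A lc show ?thesis by auto
qed

definition isRL where "isRL p q r s t xs \<longleftrightarrow> map_poly complex_of_real (quintic p q r s t) = (\<Prod>x\<leftarrow>xs. [:-x,1:])"

lemma isRL_SOME: "isRL p q r s t (quintic_roots p q r s t)"
  unfolding isRL_def quintic_roots_def using rootlist_ex by (rule someI_ex)

lemma isRL_length: "isRL p q r s t xs \<Longrightarrow> length xs = 5"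
proof -
  assume "isRL p q r s t xs"
  then have "degree (map_poly complex_of_real (quintic p q r s t)) = length xs"
    unfolding isRL_def by (simp add: deg_lin_prod)
  then show ?thesis by (simp add: fc_eq)
qed


lemma vieta:
  assumes "isRL p q r s t [a,b,c,d,e]"
  shows "of_real p = -(a+b+c+d+e)" "of_real q = a*b+a*c+a*d+a*e+b*c+b*d+b*e+c*d+c*e+d*e"
    "of_real r = -(a*b*c+a*b*d+a*b*e+a*c*d+a*c*e+a*d*e+b*c*d+b*c*e+b*d*e+c*d*e)"
    "of_real s = a*b*c*d+a*b*c*e+a*b*d*e+a*c*d*e+b*c*d*e"
    "of_real t = -(a*b*c*d*e)"
proof -
  have "[:of_real t, of_real s, of_real r, of_real q, of_real p, 1:] =
     [:-a,1:]*([:-b,1:]*([:-c,1:]*([:-d,1:]*[:-e,1:])))"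
    using assms unfolding isRL_def fc_eq by simp
  note H = this[simplified]
  have h1: "complex_of_real t = - (e * d * c * b * a)" using H by blast
  have h2: "complex_of_real s =
e * d * c * b - (- (e * d * c) - (e * d - (- e - d) * c) * b) * a" using H by blast
  have h3: "complex_of_real r =
- (e * d * c) - (e * d - (- e - d) * c) * b -
(e * d - (- e - d) * c - (- e - d - c) * b) * a" using H by blast
  have h4: "complex_of_real q =
e * d - (- e - d) * c - (- e - d - c) * b - (- e - d - c - b) * a" using H by blast
  have h5: "complex_of_real p = - e - d - c - b - a" using H by blast
  show "of_real p = -(a+b+c+d+e)" "of_real q = a*b+a*c+a*d+a*e+b*c+b*d+b*e+c*d+c*e+d*e"
    "of_real r = -(a*b*c+a*b*d+a*b*e+a*c*d+a*c*e+a*d*e+b*c*d+b*c*e+b*d*e+c*d*e)"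
    "of_real s = a*b*c*d+a*b*c*e+a*b*d*e+a*c*d*e+b*c*d*e"
    "of_real t = -(a*b*c*d*e)" unfolding h1 h2 h3 h4 h5 by algebra+
qed

lemma rd5: "root_disc [a,b,c,d,e] = (a-b)^2*(a-c)^2*(a-d)^2*(a-e)^2*(b-c)^2*(b-d)^2*(b-e)^2*(c-d)^2*(c-e)^2*(d-e)^2"
proof -
  have g: "{k<..<Suc n} = (if k < n then insert n {k<..<n} else {})" for k n :: nat by auto
  show ?thesis unfolding root_disc_def by (simp add: g lessThan_Suc eval_nat_numeral mult_ac)
qed

definition fp :: "real\<Rightarrow>real\<Rightarrow>real\<Rightarrow>real\<Rightarrow>real\<Rightarrow>complex\<Rightarrow>complex" where
 "fp p q r s t y = 5*y^4 + 4*of_real p*y^3 + 3*of_real q*y^2 + 2*of_real r*y + of_real s"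

lemma fp_fac:
  assumes "isRL p q r s t [a,b,c,d,e]"
  shows "fp p q r s t a = (a-b)*(a-c)*(a-d)*(a-e)"
  unfolding fp_def vieta[OF assms] by algebra

lemma isRL_perm: "isRL p q r s t xs \<Longrightarrow> mset ys = mset xs \<Longrightarrow> isRL p q r s t ys"
  unfolding isRL_def by (metis mset_map prod_mset_prod_list)

lemma sign_rearr: "(ab::complex)^2*ac^2*ad^2*ae^2*bc^2*bd^2*be^2*cd^2*ce^2*de^2 =
  (ab*ac*ad*ae)*((-ab)*bc*bd*be)*((-ac)*(-bc)*cd*ce)*((-ad)*(-bd)*(-cd)*de)*((-ae)*(-be)*(-ce)*(-de))"
  by algebra

lemma rd_fp:
  assumes "isRL p q r s t xs"
  shows "root_disc xs = (\<Prod>y\<leftarrow>xs. fp p q r s t y)"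
proof -
  obtain a b c d e where xs: "xs = [a,b,c,d,e]" using isRL_length[OF assms]
    by (auto simp: length_Suc_conv numeral_eq_Suc)
  have A: "isRL p q r s t [a,b,c,d,e]" using assms xs by simp
  have B: "isRL p q r s t [b,a,c,d,e]" by (rule isRL_perm[OF A]) simp
  have C: "isRL p q r s t [c,a,b,d,e]" by (rule isRL_perm[OF A]) simp
  have D: "isRL p q r s t [d,a,b,c,e]" by (rule isRL_perm[OF A]) simp
  have E: "isRL p q r s t [e,a,b,c,d]" by (rule isRL_perm[OF A]) simp
  show ?thesis unfolding xs rd5 using fp_fac[OF A] fp_fac[OF B] fp_fac[OF C] fp_fac[OF D] fp_fac[OF E]
    sign_rearr[of "a-b" "a-c" "a-d" "a-e" "b-c" "b-d" "b-e" "c-d" "c-e" "d-e"]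
    by (simp add: minus_diff_eq)
qed

lemma rd_perm: "isRL p q r s t xs \<Longrightarrow> mset ys = mset xs \<Longrightarrow> root_disc ys = root_disc xs"
  using rd_fp isRL_perm by (metis mset_map prod_mset_prod_list)


definition QF :: "(nat\<Rightarrow>nat\<Rightarrow>real) \<Rightarrow> nat \<Rightarrow> (nat\<Rightarrow>real) \<Rightarrow> real" where
  "QF A n c = (\<Sum>i<n. \<Sum>j<n. A i j * c i * c j)"

definition schur :: "(nat\<Rightarrow>nat\<Rightarrow>real) \<Rightarrow> nat\<Rightarrow>nat\<Rightarrow>real" where
  "schur A i j = A (Suc i) (Suc j) - A (Suc i) 0 * A 0 (Suc j) / A 0 0"

definition piv :: "(nat\<Rightarrow>nat\<Rightarrow>real) \<Rightarrow> nat \<Rightarrow> real" where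
  "piv A k = (schur ^^ k) A 0 0"

definition symm :: "(nat\<Rightarrow>nat\<Rightarrow>real) \<Rightarrow> bool" where
  "symm A \<longleftrightarrow> (\<forall>i j. A i j = A j i)"

definition pd :: "(nat\<Rightarrow>nat\<Rightarrow>real) \<Rightarrow> nat \<Rightarrow> bool" where
  "pd A n \<longleftrightarrow> (\<forall>c. (\<exists>i<n. c i \<noteq> 0) \<longrightarrow> QF A n c > 0)"

lemma symm_schur: "symm A \<Longrightarrow> symm (schur A)"
  unfolding symm_def schur_def by (simp add: mult.commute)

lemma piv_Suc: "piv A (Suc k) = piv (schur A) k"
  unfolding piv_def by (simp add: funpow_swap1)

lemma piv_0: "piv A 0 = A 0 0" unfolding piv_def by simp

lemma QF_split:
  assumes "symm A" "A 0 0 \<noteq> 0"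
  shows "QF A (Suc n) c = A 0 0 * (c 0 + (\<Sum>j<n. A 0 (Suc j) * c (Suc j)) / A 0 0)^2
           + QF (schur A) n (\<lambda>j. c (Suc j))"
proof -
  define B where "B = (\<Sum>j<n. A 0 (Suc j) * c (Suc j))"
  have B': "(\<Sum>i<n. A (Suc i) 0 * c (Suc i)) = B"
    unfolding B_def using assms(1) by (simp add: symm_def)
  have "QF A (Suc n) c = A 0 0 * c 0 * c 0 + c 0 * B + c 0 * (\<Sum>i<n. A (Suc i) 0 * c (Suc i))
       + (\<Sum>i<n. \<Sum>j<n. A (Suc i) (Suc j) * c (Suc i) * c (Suc j))"
    unfolding QF_def B_def
    apply (simp only: sum.lessThan_Suc_shift)
    by (simp add: sum.distrib sum_distrib_left sum_distrib_right algebra_simps)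
  also have "\<dots> = A 0 0 * c 0 * c 0 + 2 * c 0 * B
       + (\<Sum>i<n. \<Sum>j<n. A (Suc i) (Suc j) * c (Suc i) * c (Suc j))" using B' by simp
  finally have 1: "QF A (Suc n) c = A 0 0 * c 0 * c 0 + 2 * c 0 * B
       + (\<Sum>i<n. \<Sum>j<n. A (Suc i) (Suc j) * c (Suc i) * c (Suc j))" .
  have "QF (schur A) n (\<lambda>j. c (Suc j)) = (\<Sum>i<n. \<Sum>j<n. A (Suc i) (Suc j) * c (Suc i) * c (Suc j))
     - (\<Sum>i<n. A (Suc i) 0 * c (Suc i)) * (\<Sum>j<n. A 0 (Suc j) * c (Suc j)) / A 0 0"
    unfolding QF_def schur_def
    apply (simp add: sum_subtractf sum_divide_distrib sum_product algebra_simps)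
    apply (subst sum.swap)
    by (simp add: algebra_simps)
  also have "\<dots> = (\<Sum>i<n. \<Sum>j<n. A (Suc i) (Suc j) * c (Suc i) * c (Suc j)) - B * B / A 0 0"
    using B' B_def by simp
  finally have 2: "QF (schur A) n (\<lambda>j. c (Suc j)) = (\<Sum>i<n. \<Sum>j<n. A (Suc i) (Suc j) * c (Suc i) * c (Suc j)) - B * B / A 0 0" .
  show ?thesis unfolding 1 2 B_def[symmetric] using assms(2)
    by (simp add: field_simps power2_eq_square)
qed

lemma QF_zero: "(\<forall>i<n. c i = 0) \<Longrightarrow> QF A n c = 0"
  unfolding QF_def by simp

lemma QF_nonneg_pd: "pd A n \<Longrightarrow> QF A n c \<ge> 0"
  unfolding pd_def by (metis QF_zero less_le order_refl)

lemma piv_pd: "symm A \<Longrightarrow> (\<forall>k<n. piv A k > 0) \<Longrightarrow> pd A n"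
proof (induction n arbitrary: A)
  case 0
  then show ?case unfolding pd_def by simp
next
  case (Suc n)
  have a0: "A 0 0 > 0" using Suc.prems(2) piv_0 by fastforce
  have "\<forall>k<n. piv (schur A) k > 0" using Suc.prems(2) by (simp add: piv_Suc[symmetric])
  then have "pd (schur A) n"
    using Suc.IH[OF symm_schur[OF Suc.prems(1)]] by simp
  show ?case unfolding pd_def
  proof (intro allI impI)
    fix c :: "nat \<Rightarrow> real" assume c: "\<exists>i<Suc n. c i \<noteq> 0"
    let ?B = "(\<Sum>j<n. A 0 (Suc j) * c (Suc j))"
    have eq: "QF A (Suc n) c = A 0 0 * (c 0 + ?B / A 0 0)^2 + QF (schur A) n (\<lambda>j. c (Suc j))"
      using QF_split[OF Suc.prems(1)] a0 by simp
    show "QF A (Suc n) c > 0"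
    proof (cases "\<exists>j<n. c (Suc j) \<noteq> 0")
      case True
      then have "QF (schur A) n (\<lambda>j. c (Suc j)) > 0" using \<open>pd (schur A) n\<close> unfolding pd_def by auto
      moreover have "A 0 0 * (c 0 + ?B / A 0 0)^2 \<ge> 0" using a0 by simp
      ultimately show ?thesis using eq by linarith
    next
      case False
      then have c0: "c 0 \<noteq> 0" using c by (metis less_Suc_eq_0_disj)
      have "?B = 0" using False by simp
      moreover have "QF (schur A) n (\<lambda>j. c (Suc j)) = 0" using False by (intro QF_zero) auto
      ultimately show ?thesis using eq a0 c0 by simp
    qed
  qed
qed

lemma pd_piv: "symm A \<Longrightarrow> pd A n \<Longrightarrow> \<forall>k<n. piv A k > 0"
proof (induction n arbitrary: A)
  case 0
  then show ?case by simp
next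
  case (Suc n)
  define e0 where "e0 = (\<lambda>i::nat. if i = 0 then 1 else (0::real))"
  have "QF A (Suc n) e0 = A 0 0"
    unfolding QF_def e0_def by (simp only: sum.lessThan_Suc_shift) simp
  moreover have "QF A (Suc n) e0 > 0" using Suc.prems(2) unfolding pd_def e0_def by force
  ultimately have a0: "A 0 0 > 0" by simp
  have "pd (schur A) n" unfolding pd_def
  proof (intro allI impI)
    fix c :: "nat \<Rightarrow> real" assume c: "\<exists>i<n. c i \<noteq> 0"
    define d where "d = (\<lambda>i. if i = 0 then - (\<Sum>j<n. A 0 (Suc j) * c j) / A 0 0 else c (i - 1))"
    have "QF A (Suc n) d = A 0 0 * (d 0 + (\<Sum>j<n. A 0 (Suc j) * d (Suc j)) / A 0 0)^2
           + QF (schur A) n (\<lambda>j. d (Suc j))"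
      using QF_split[OF Suc.prems(1)] a0 by simp
    also have "\<dots> = QF (schur A) n c" unfolding d_def by simp
    finally have "QF A (Suc n) d = QF (schur A) n c" .
    moreover have "\<exists>i<Suc n. d i \<noteq> 0" using c unfolding d_def
      by (metis Suc_less_eq diff_Suc_1 nat.distinct(1))
    ultimately show "QF (schur A) n c > 0" using Suc.prems(2) unfolding pd_def by metis
  qed
  from Suc.IH[OF symm_schur[OF Suc.prems(1)] this] have "\<forall>k<n. piv (schur A) k > 0" .
  then show ?case using a0 by (metis less_Suc_eq_0_disj piv_0 piv_Suc)
qed

definition g2 :: "(nat\<Rightarrow>nat\<Rightarrow>real) \<Rightarrow> real" where
  "g2 A = A 0 0*A 1 1 - A 0 1*A 1 0"

definition g3 :: "(nat\<Rightarrow>nat\<Rightarrow>real) \<Rightarrow> real" where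
  "g3 A = A 0 0*A 1 1*A 2 2 - A 0 0*A 1 2*A 2 1 - A 0 1*A 1 0*A 2 2 + A 0 1*A 1 2*A 2 0 + A 0 2*A 1 0*A 2 1 - A 0 2*A 1 1*A 2 0"

definition g4 :: "(nat\<Rightarrow>nat\<Rightarrow>real) \<Rightarrow> real" where
  "g4 A = A 0 0*A 1 1*A 2 2*A 3 3 - A 0 0*A 1 1*A 2 3*A 3 2 - A 0 0*A 1 2*A 2 1*A 3 3 + A 0 0*A 1 2*A 2 3*A 3 1 + A 0 0*A 1 3*A 2 1*A 3 2 - A 0 0*A 1 3*A 2 2*A 3 1 - A 0 1*A 1 0*A 2 2*A 3 3 + A 0 1*A 1 0*A 2 3*A 3 2 + A 0 1*A 1 2*A 2 0*A 3 3 - A 0 1*A 1 2*A 2 3*A 3 0 - A 0 1*A 1 3*A 2 0*A 3 2 + A 0 1*A 1 3*A 2 2*A 3 0 + A 0 2*A 1 0*A 2 1*A 3 3 - A 0 2*A 1 0*A 2 3*A 3 1 - A 0 2*A 1 1*A 2 0*A 3 3 + A 0 2*A 1 1*A 2 3*A 3 0 + A 0 2*A 1 3*A 2 0*A 3 1 - A 0 2*A 1 3*A 2 1*A 3 0 - A 0 3*A 1 0*A 2 1*A 3 2 + A 0 3*A 1 0*A 2 2*A 3 1 + A 0 3*A 1 1*A 2 0*A 3 2 - A 0 3*A 1 1*A 2 2*A 3 0 - A 0 3*A 1 2*A 2 0*A 3 1 + A 0 3*A 1 2*A 2 1*A 3 0"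

lemma g2_schur: "A 0 0 \<noteq> 0 \<Longrightarrow> g2 A = A 0 0 * schur A 0 0"
  unfolding g2_def schur_def by (simp add: field_simps)

lemma g3_schur: "A 0 0 \<noteq> 0 \<Longrightarrow> g3 A = A 0 0 * g2 (schur A)"
  unfolding g2_def g3_def schur_def by (simp add: field_simps eval_nat_numeral; algebra)

lemma g4_schur: "A 0 0 \<noteq> 0 \<Longrightarrow> g4 A = A 0 0 * g3 (schur A)"
  unfolding g4_def g3_def schur_def by (simp add: field_simps eval_nat_numeral; algebra)

lemma piv_g2: "piv A 0 \<noteq> 0 \<Longrightarrow> g2 A = piv A 0 * piv A 1"
  using g2_schur by (simp add: piv_0 piv_Suc)

lemma piv_g3: "piv A 0 \<noteq> 0 \<Longrightarrow> piv A 1 \<noteq> 0 \<Longrightarrow> g3 A = piv A 0 * piv A 1 * piv A 2"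
  using g3_schur[of A] g2_schur[of "schur A"] by (simp add: piv_0 piv_Suc numeral_eq_Suc)

lemma piv_g4: "piv A 0 \<noteq> 0 \<Longrightarrow> piv A 1 \<noteq> 0 \<Longrightarrow> piv A 2 \<noteq> 0 \<Longrightarrow>
   g4 A = piv A 0 * piv A 1 * piv A 2 * piv A 3"
  using g4_schur[of A] g3_schur[of "schur A"] g2_schur[of "schur (schur A)"]
  by (simp add: piv_0 piv_Suc numeral_eq_Suc)


definition Hs :: "real\<Rightarrow>real\<Rightarrow>real\<Rightarrow>real\<Rightarrow>real\<Rightarrow>real list" where
  "Hs p q r s t = (let s0 = 5; s1 = -p; s2 = -p*s1-2*q; s3 = -p*s2-q*s1-3*r;
  s4 = -p*s3-q*s2-r*s1-4*s; s5 = -p*s4-q*s3-r*s2-s*s1-5*t; s6 = -p*s5-q*s4-r*s3-s*s2-t*s1 in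
   [s0,s1,s2,s3,s4,s5,s6])"

definition HM :: "real\<Rightarrow>real\<Rightarrow>real\<Rightarrow>real\<Rightarrow>real\<Rightarrow>nat\<Rightarrow>nat\<Rightarrow>real" where
  "HM p q r s t i j = Hs p q r s t ! (i+j)"

lemma HM_symm: "symm (HM p q r s t)"
  unfolding symm_def HM_def by (simp add: add.commute)

lemma HM_piv0: "piv (HM p q r s t) 0 = 5"
  unfolding piv_0 HM_def Hs_def Let_def by simp

lemma HM_g2: "g2 (HM p q r s t) = 2 * L3 p q r s t"
  unfolding g2_def HM_def Hs_def L3_def Let_def by (simp add: eval_nat_numeral; algebra)

lemma HM_g3: "g3 (HM p q r s t) = L2 p q r s t"
  unfolding g3_def HM_def Hs_def L2_def Let_def by (simp add: eval_nat_numeral; algebra)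

lemma HM_g4: "g4 (HM p q r s t) = L1 p q r s t"
  unfolding g4_def HM_def Hs_def L1_def Let_def by (simp add: eval_nat_numeral; algebra)

lemma powsum:
  assumes "isRL p q r s t [a,b,c,d,e]" "m \<le> 6"
  shows "of_real (Hs p q r s t ! m) = a^m+b^m+c^m+d^m+e^m"
proof -
  note V = vieta[OF assms(1)]
  have "m = 0 \<or> m = 1 \<or> m = 2 \<or> m = 3 \<or> m = 4 \<or> m = 5 \<or> m = 6" using assms(2) by auto
  moreover have "of_real (Hs p q r s t ! 0) = a^0+b^0+c^0+d^0+e^0"
    unfolding Hs_def Let_def by simp
  moreover have "of_real (Hs p q r s t ! 1) = a^1+b^1+c^1+d^1+e^1"
    unfolding Hs_def Let_def by (simp add: V)
  moreover have "of_real (Hs p q r s t ! 2) = a^2+b^2+c^2+d^2+e^2"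
    unfolding Hs_def Let_def by (simp add: V; algebra)
  moreover have "of_real (Hs p q r s t ! 3) = a^3+b^3+c^3+d^3+e^3"
    unfolding Hs_def Let_def by (simp add: V; algebra)
  moreover have "of_real (Hs p q r s t ! 4) = a^4+b^4+c^4+d^4+e^4"
    unfolding Hs_def Let_def by (simp add: V; algebra)
  moreover have "of_real (Hs p q r s t ! 5) = a^5+b^5+c^5+d^5+e^5"
    unfolding Hs_def Let_def by (simp add: V; algebra)
  moreover have "of_real (Hs p q r s t ! 6) = a^6+b^6+c^6+d^6+e^6"
    unfolding Hs_def Let_def by (simp add: V; algebra)
  ultimately show ?thesis by auto
qed

definition GG :: "(nat\<Rightarrow>real) \<Rightarrow> complex \<Rightarrow> complex" where
  "GG c y = (\<Sum>i<4. of_real (c i) * y^i)"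

lemma QF_roots:
  assumes "isRL p q r s t [a,b,c,d,e]"
  shows "of_real (QF (HM p q r s t) 4 x) = GG x a^2 + GG x b^2 + GG x c^2 + GG x d^2 + GG x e^2"
  unfolding QF_def HM_def GG_def
  by (simp add: eval_nat_numeral powsum[OF assms]; algebra)


lemma poly_lin_prod: "poly (\<Prod>x\<leftarrow>xs. [:-x,1:]) (z::complex) = (\<Prod>x\<leftarrow>xs. z - x)"
proof (induction xs)
  case (Cons a xs)
  then show ?case by (simp add: algebra_simps)
qed simp

lemma root_iff: "isRL p q r s t xs \<Longrightarrow>
   poly (map_poly complex_of_real (quintic p q r s t)) z = 0 \<longleftrightarrow> z \<in> set xs"
  unfolding isRL_def by (auto simp: poly_lin_prod prod_list_zero_iff image_iff)

lemma poly_fc: "poly (map_poly complex_of_real (quintic p q r s t)) z =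
   of_real t + of_real s * z + of_real r * z^2 + of_real q * z^3 + of_real p * z^4 + z^5"
  by (simp only: fc_eq poly_pCons poly_0) algebra

lemma poly_f: "complex_of_real (poly (quintic p q r s t) x) =
   poly (map_poly complex_of_real (quintic p q r s t)) (of_real x)"
  unfolding poly_fc unfolding quintic_def by (simp only: poly_pCons poly_0) (simp; algebra)

lemma cnj_root: "isRL p q r s t xs \<Longrightarrow> z \<in> set xs \<Longrightarrow> cnj z \<in> set xs"
proof -
  assume A: "isRL p q r s t xs" "z \<in> set xs"
  have "poly (map_poly complex_of_real (quintic p q r s t)) (cnj z) =
        cnj (poly (map_poly complex_of_real (quintic p q r s t)) z)"
    unfolding poly_fc by simp
  also have "poly (map_poly complex_of_real (quintic p q r s t)) z = 0"
    using root_iff[OF A(1), of z] A(2) by blast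
  finally have "poly (map_poly complex_of_real (quintic p q r s t)) (cnj z) = 0" by simp
  then show ?thesis using root_iff[OF A(1), of "cnj z"] by blast
qed

definition RS where "RS xs = {z \<in> set xs. Im z = 0}"
definition NS where "NS xs = {z \<in> set xs. Im z \<noteq> 0}"

lemma of_real_Re: "Im z = 0 \<Longrightarrow> complex_of_real (Re z) = z"
  by (simp add: complex_eqI)

lemma real_roots_eq: "isRL p q r s t xs \<Longrightarrow> real_roots (quintic p q r s t) = Re ` RS xs"
proof -
  assume A: "isRL p q r s t xs"
  have 1: "x \<in> real_roots (quintic p q r s t) \<longleftrightarrow> of_real x \<in> set xs" for x
  proof -
    have "x \<in> real_roots (quintic p q r s t) \<longleftrightarrow> complex_of_real (poly (quintic p q r s t) x) = 0"
      unfolding real_roots_def by simp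
    also have "\<dots> \<longleftrightarrow> of_real x \<in> set xs" unfolding poly_f using root_iff[OF A] by blast
    finally show ?thesis .
  qed
  show ?thesis
  proof (intro set_eqI iffI)
    fix x assume "x \<in> real_roots (quintic p q r s t)"
    then have "of_real x \<in> RS xs" using 1 unfolding RS_def by simp
    then show "x \<in> Re ` RS xs" by (metis Re_complex_of_real image_eqI)
  next
    fix x assume "x \<in> Re ` RS xs"
    then obtain z where z: "z \<in> set xs" "Im z = 0" "x = Re z" unfolding RS_def by auto
    then have "of_real x = z" using of_real_Re by simp
    then show "x \<in> real_roots (quintic p q r s t)" using 1 z by simp
  qed
qed
lemma card_real_roots: "isRL p q r s t xs \<Longrightarrow> card (real_roots (quintic p q r s t)) = card (RS xs)"
proof -
  assume A: "isRL p q r s t xs"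
  have "inj_on Re (RS xs)" unfolding RS_def inj_on_def by (auto intro: complex_eqI)
  then show ?thesis using real_roots_eq[OF A] by (simp add: card_image)
qed

lemma nonreal_eq: "isRL p q r s t xs \<Longrightarrow> nonreal_roots (quintic p q r s t) = NS xs"
  unfolding nonreal_roots_def NS_def using root_iff by blast



lemma cnj_neq: "Im z \<noteq> 0 \<Longrightarrow> cnj z \<noteq> z"
  by (auto simp: complex_eq_iff)

lemma classify:
  assumes A: "isRL p q r s t xs" and dist: "distinct xs"
  shows "(\<exists>a b c d e. mset (map complex_of_real [a,b,c,d,e]) = mset xs) \<or>
         (\<exists>a b c z. Im z \<noteq> 0 \<and> mset [complex_of_real a, of_real b, of_real c, z, cnj z] = mset xs) \<or>
         (\<exists>a z w. Im z \<noteq> 0 \<and> Im w \<noteq> 0 \<and> mset [complex_of_real a, z, cnj z, w, cnj w] = mset xs)"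
proof -
  have len: "length xs = 5" using isRL_length[OF A] .
  have card: "card (set xs) = 5" using distinct_card[OF dist] len by simp
  have cl: "\<And>z. z \<in> set xs \<Longrightarrow> cnj z \<in> set xs" using cnj_root[OF A] by blast
  show ?thesis
  proof (cases "\<forall>z\<in>set xs. Im z = 0")
    case True
    obtain x1 x2 x3 x4 x5 where xs: "xs = [x1,x2,x3,x4,x5]" using len
      by (auto simp: length_Suc_conv numeral_eq_Suc)
    have "map complex_of_real [Re x1, Re x2, Re x3, Re x4, Re x5] = xs"
      using True unfolding xs by (simp add: of_real_Re)
    then show ?thesis by metis
  next
    case False
    then obtain z where z: "z \<in> set xs" "Im z \<noteq> 0" by blast
    have z': "cnj z \<in> set xs" "cnj z \<noteq> z" using cl[OF z(1)] cnj_neq[OF z(2)] by auto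
    show ?thesis
    proof (cases "\<forall>u\<in>set xs. Im u \<noteq> 0 \<longrightarrow> u \<in> {z, cnj z}")
      case True
      define R where "R = set xs - {z, cnj z}"
      have "card R = 3" unfolding R_def using z z' card
        by (subst card_Diff_subset) auto
      then obtain a b c where abc: "R = {a,b,c}" "a \<noteq> b" "b \<noteq> c" "a \<noteq> c"
        unfolding card_3_iff by blast
      have Rr: "\<And>u. u \<in> R \<Longrightarrow> Im u = 0" using True unfolding R_def by blast
      have Rs: "R \<subseteq> set xs" "z \<notin> R" "cnj z \<notin> R" unfolding R_def by auto
      let ?ys = "[complex_of_real (Re a), of_real (Re b), of_real (Re c), z, cnj z]"
      have ys: "?ys = [a,b,c,z,cnj z]" using Rr abc by (simp add: of_real_Re)
      have "set ?ys = set xs" unfolding ys using abc Rs z z' R_def by auto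
      moreover have "distinct ?ys" unfolding ys using abc Rs z z' by auto
      ultimately have "mset ?ys = mset xs" using dist set_eq_iff_mset_eq_distinct by blast
      then show ?thesis using z(2) by blast
    next
      case False
      then obtain w where w: "w \<in> set xs" "Im w \<noteq> 0" "w \<noteq> z" "w \<noteq> cnj z" by auto
      have w': "cnj w \<in> set xs" "cnj w \<noteq> w" "cnj w \<noteq> z" "cnj w \<noteq> cnj z"
        using cl[OF w(1)] cnj_neq[OF w(2)] w(3,4) by (auto simp: complex_eq_iff)
      have N4: "\<forall>u\<in>set xs. Im u \<noteq> 0 \<longrightarrow> u \<in> {z, cnj z, w, cnj w}"
      proof (rule ccontr)
        assume "\<not> ?thesis"
        then obtain u where u: "u \<in> set xs" "Im u \<noteq> 0" "u \<notin> {z, cnj z, w, cnj w}" by blast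
        have u': "cnj u \<in> set xs" "cnj u \<noteq> u" "cnj u \<notin> {z, cnj z, w, cnj w}"
          using cl[OF u(1)] cnj_neq[OF u(2)] u(3) by (auto simp: complex_eq_iff)
        have "{z, cnj z, w, cnj w, u, cnj u} \<subseteq> set xs" using z z' w w' u u' by auto
        then have "card {z, cnj z, w, cnj w, u, cnj u} \<le> 5" using card by (metis card_mono finite_set)
        moreover have "card {z, cnj z, w, cnj w, u, cnj u} = 6" using z' w w' u u' by auto
        ultimately show False by simp
      qed
      define R where "R = set xs - {z, cnj z, w, cnj w}"
      have "card {z, cnj z, w, cnj w} = 4" using z' w w' by auto
      then have "card R = 1" unfolding R_def using z z' w w' card
        by (subst card_Diff_subset) auto
      then obtain a where a: "R = {a}" using card_1_singleton_iff by (metis One_nat_def)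
      have Rr: "\<And>u. u \<in> R \<Longrightarrow> Im u = 0" using N4 unfolding R_def by blast
      have Rs: "R \<subseteq> set xs" "z \<notin> R" "cnj z \<notin> R" "w \<notin> R" "cnj w \<notin> R" unfolding R_def by auto
      let ?ys = "[complex_of_real (Re a), z, cnj z, w, cnj w]"
      have ys: "?ys = [a,z,cnj z,w,cnj w]" using Rr a by (simp add: of_real_Re)
      have "set ?ys = set xs" unfolding ys using a Rs z z' w w' R_def by auto
      moreover have "distinct ?ys" unfolding ys using a Rs z z' w w' by auto
      ultimately have "mset ?ys = mset xs" using dist set_eq_iff_mset_eq_distinct by blast
      then show ?thesis using z(2) w(2) by blast
    qed
  qed
qed


definition nm :: "complex \<Rightarrow> real" where "nm u = (Re u)^2 + (Im u)^2"

lemma nm_pos: "u \<noteq> 0 \<Longrightarrow> nm u > 0"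
  unfolding nm_def by (simp add: complex_eq_iff sum_power2_gt_zero_iff)

lemma mcnj: "u * cnj u = of_real (nm u)"
  unfolding nm_def by (rule complex_mult_cnj)

lemma ra_cnj: "(complex_of_real a - z) * (of_real a - cnj z) = of_real (nm (of_real a - z))"
proof -
  have "(complex_of_real a - z) * (of_real a - cnj z) = (of_real a - z) * cnj (of_real a - z)" by simp
  then show ?thesis using mcnj[of "complex_of_real a - z"] by simp
qed

lemma zz_cnj: "(z - cnj z)^2 = of_real (-4 * (Im z)^2)"
  by (simp add: complex_eq_iff power2_eq_square)

lemma discA:
  assumes "distinct [a,b,c,d,e::real]"
  shows "Re (root_disc (map complex_of_real [a,b,c,d,e])) > 0"
proof -
  have "root_disc (map complex_of_real [a,b,c,d,e]) =
    of_real ((a-b)^2*(a-c)^2*(a-d)^2*(a-e)^2*(b-c)^2*(b-d)^2*(b-e)^2*(c-d)^2*(c-e)^2*(d-e)^2)"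
    by (simp add: rd5)
  then show ?thesis using assms by simp
qed

lemma discB:
  assumes "distinct [a,b,c::real]" "Im z \<noteq> 0"
  shows "Re (root_disc [complex_of_real a, of_real b, of_real c, z, cnj z]) < 0"
proof -
  let ?A = "complex_of_real a" and ?B = "complex_of_real b" and ?C = "complex_of_real c"
  have "root_disc [?A, ?B, ?C, z, cnj z] = of_real ((a-b)^2*(a-c)^2*(b-c)^2) *
     ((?A - z)*(?A - cnj z))^2 * ((?B - z)*(?B - cnj z))^2 * ((?C - z)*(?C - cnj z))^2 * (z - cnj z)^2"
    by (simp add: rd5 power_mult_distrib mult_ac)
  also have "\<dots> = of_real ((a-b)^2*(a-c)^2*(b-c)^2 * (nm (?A - z))^2 * (nm (?B - z))^2 *
      (nm (?C - z))^2 * (-4 * (Im z)^2))"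
    unfolding ra_cnj zz_cnj by simp
  finally have eq: "Re (root_disc [?A, ?B, ?C, z, cnj z]) = (a-b)^2*(a-c)^2*(b-c)^2 * (nm (?A - z))^2 * (nm (?B - z))^2 *
      (nm (?C - z))^2 * (-4 * (Im z)^2)" by simp
  have n: "nm (?A - z) > 0" "nm (?B - z) > 0" "nm (?C - z) > 0"
    using assms(2) by (auto intro!: nm_pos simp: complex_eq_iff)
  have p: "(a-b)^2*(a-c)^2*(b-c)^2 * (nm (?A - z))^2 * (nm (?B - z))^2 * (nm (?C - z))^2 > 0"
    using assms(1) n by simp
  have "-4 * (Im z)^2 < 0" using assms(2) by simp
  then show ?thesis unfolding eq using p by (simp add: mult_pos_neg)
qed

lemma discC:
  assumes "Im z \<noteq> 0" "Im w \<noteq> 0" "w \<noteq> z" "w \<noteq> cnj z"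
  shows "Re (root_disc [complex_of_real a, z, cnj z, w, cnj w]) > 0"
proof -
  let ?A = "complex_of_real a"
  have "root_disc [?A, z, cnj z, w, cnj w] =
     ((?A - z)*(?A - cnj z))^2 * ((?A - w)*(?A - cnj w))^2 * (z - cnj z)^2 * (w - cnj w)^2 *
     ((z - w) * cnj (z - w))^2 * ((z - cnj w) * cnj (z - cnj w))^2"
    by (simp add: rd5 power_mult_distrib mult_ac)
  also have "\<dots> = of_real ((nm (?A - z))^2 * (nm (?A - w))^2 * ((-4 * (Im z)^2) * (-4 * (Im w)^2)) *
      (nm (z - w))^2 * (nm (z - cnj w))^2)"
    unfolding ra_cnj zz_cnj mcnj by simp
  finally have eq: "Re (root_disc [?A, z, cnj z, w, cnj w]) = (nm (?A - z))^2 * (nm (?A - w))^2 * ((-4 * (Im z)^2) * (-4 * (Im w)^2)) *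
      (nm (z - w))^2 * (nm (z - cnj w))^2" by simp
  have n: "nm (?A - z) > 0" "nm (?A - w) > 0" "nm (z - w) > 0" "nm (z - cnj w) > 0"
    using assms by (auto intro!: nm_pos simp: complex_eq_iff)
  have P: "(-4 * (Im z)^2) * (-4 * (Im w)^2) > 0" using assms(1,2) by (simp add: mult_neg_neg)
  have q: "0 < (nm (?A - z))^2" "0 < (nm (?A - w))^2" "0 < (nm (z - w))^2" "0 < (nm (z - cnj w))^2"
    using n by simp_all
  show ?thesis unfolding eq
    by (rule mult_pos_pos[OF mult_pos_pos[OF mult_pos_pos[OF mult_pos_pos[OF q(1) q(2)] P] q(3)] q(4)])
qed


lemma perp: "\<exists>k1 k2 k3::real. (k1 \<noteq> 0 \<or> k2 \<noteq> 0 \<or> k3 \<noteq> 0) \<and> v1*k1+v2*k2+v3*k3 = 0"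
proof (cases "v1 = 0")
  case True
  then show ?thesis by (intro exI[of _ 1] exI[of _ 0]) simp
next
  case False
  then show ?thesis by (intro exI[of _ v2] exI[of _ "-v1"] exI[of _ 0]) (simp add: algebra_simps)
qed

lemma two_eq: "\<exists>k1 k2 k3::real. (k1 \<noteq> 0 \<or> k2 \<noteq> 0 \<or> k3 \<noteq> 0) \<and>
   u1*k1+u2*k2+u3*k3 = 0 \<and> v1*k1+v2*k2+v3*k3 = 0"
proof -
  define c1 where "c1 = u2*v3 - u3*v2"
  define c2 where "c2 = u3*v1 - u1*v3"
  define c3 where "c3 = u1*v2 - u2*v1"
  show ?thesis
  proof (cases "c1 \<noteq> 0 \<or> c2 \<noteq> 0 \<or> c3 \<noteq> 0")
    case True
    have "u1*c1+u2*c2+u3*c3 = 0" "v1*c1+v2*c2+v3*c3 = 0" unfolding c1_def c2_def c3_def by algebra+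
    then show ?thesis using True by blast
  next
    case False
    show ?thesis
    proof (cases "u1 = 0 \<and> u2 = 0 \<and> u3 = 0")
      case True
      obtain k1 k2 k3 where "(k1 \<noteq> 0 \<or> k2 \<noteq> 0 \<or> k3 \<noteq> 0) \<and> v1*k1+v2*k2+v3*k3 = 0"
        using perp by blast
      then show ?thesis using True by auto
    next
      case uz: False
      obtain k1 k2 k3 where k: "(k1 \<noteq> 0 \<or> k2 \<noteq> 0 \<or> k3 \<noteq> 0)" "u1*k1+u2*k2+u3*k3 = 0"
        using perp by blast
      have id: "(u1^2+u2^2+u3^2)*(v1*k1+v2*k2+v3*k3) = (u1*k1+u2*k2+u3*k3)*(u1*v1+u2*v2+u3*v3)
          + (c1*(u2*k3-u3*k2) + c2*(u3*k1-u1*k3) + c3*(u1*k2-u2*k1))"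
        unfolding c1_def c2_def c3_def by algebra
      have "u1^2 > 0 \<or> u2^2 > 0 \<or> u3^2 > 0" using uz by auto
      moreover have "u1^2 \<ge> 0" "u2^2 \<ge> 0" "u3^2 \<ge> 0" by simp_all
      ultimately have "u1^2+u2^2+u3^2 > 0" by linarith
      moreover have "(u1^2+u2^2+u3^2)*(v1*k1+v2*k2+v3*k3) = 0" using id k(2) False by simp
      ultimately have "v1*k1+v2*k2+v3*k3 = 0" by simp
      then show ?thesis using k by blast
    qed
  qed
qed


lemma L_from_piv:
  assumes "\<forall>k<4. piv (HM p q r s t) k > 0"
  shows "L3 p q r s t > 0 \<and> L2 p q r s t > 0 \<and> L1 p q r s t > 0"
proof -
  let ?H = "HM p q r s t"
  have P: "piv ?H 0 > 0" "piv ?H 1 > 0" "piv ?H 2 > 0" "piv ?H 3 > 0" using assms by auto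
  have "g2 ?H > 0" using piv_g2[of ?H] P by simp
  moreover have "g3 ?H > 0" using piv_g3[of ?H] P by simp
  moreover have "g4 ?H > 0" using piv_g4[of ?H] P by simp
  ultimately show ?thesis using HM_g2 HM_g3 HM_g4 by simp
qed

lemma piv_from_L:
  assumes "L3 p q r s t > 0" "L2 p q r s t > 0" "L1 p q r s t > 0"
  shows "\<forall>k<4. piv (HM p q r s t) k > 0"
proof -
  let ?H = "HM p q r s t"
  have p0: "piv ?H 0 > 0" using HM_piv0 by simp
  have "piv ?H 0 * piv ?H 1 > 0" using piv_g2[of ?H] p0 HM_g2 assms by simp
  then have p1: "piv ?H 1 > 0" using p0 zero_less_mult_pos by blast
  have "piv ?H 0 * piv ?H 1 * piv ?H 2 > 0" using piv_g3[of ?H] p0 p1 HM_g3 assms by simp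
  then have p2: "piv ?H 2 > 0" using mult_pos_pos[OF p0 p1] zero_less_mult_pos by blast
  have "piv ?H 0 * piv ?H 1 * piv ?H 2 * piv ?H 3 > 0" using piv_g4[of ?H] p0 p1 p2 HM_g4 assms by simp
  then have p3: "piv ?H 3 > 0" using mult_pos_pos[OF mult_pos_pos[OF p0 p1] p2] zero_less_mult_pos by blast
  show ?thesis
  proof (intro allI impI)
    fix k :: nat assume "k < 4"
    then have "k = 0 \<or> k = 1 \<or> k = 2 \<or> k = 3" by auto
    then show "piv ?H k > 0" using p0 p1 p2 p3 by auto
  qed
qed

lemma LposA:
  assumes A: "isRL p q r s t (map complex_of_real [a,b,c,d,e])" and dist: "distinct [a,b,c,d,e]"
  shows "L3 p q r s t > 0 \<and> L2 p q r s t > 0 \<and> L1 p q r s t > 0"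
proof -
  have A': "isRL p q r s t [of_real a, of_real b, of_real c, of_real d, of_real e]" using A by simp
  have pd: "pd (HM p q r s t) 4" unfolding pd_def
  proof (intro allI impI)
    fix x :: "nat \<Rightarrow> real" assume x: "\<exists>i<4. x i \<noteq> 0"
    define g where "g y = x 0 + x 1 * y + x 2 * y^2 + x 3 * y^3" for y :: real
    have G: "GG x (of_real y) = of_real (g y)" for y
      unfolding GG_def g_def by (simp add: eval_nat_numeral)
    have "of_real (QF (HM p q r s t) 4 x) = complex_of_real (g a^2 + g b^2 + g c^2 + g d^2 + g e^2)"
      using QF_roots[OF A', of x] unfolding G by simp
    then have Q: "QF (HM p q r s t) 4 x = g a^2 + g b^2 + g c^2 + g d^2 + g e^2"
      using of_real_eq_iff by blast
    show "QF (HM p q r s t) 4 x > 0"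
    proof (rule ccontr)
      assume "\<not> ?thesis"
      then have "g a^2 + g b^2 + g c^2 + g d^2 + g e^2 \<le> 0" using Q by simp
      moreover have "g a^2 \<ge> 0" "g b^2 \<ge> 0" "g c^2 \<ge> 0" "g d^2 \<ge> 0" "g e^2 \<ge> 0" by simp_all
      ultimately have "g a^2 = 0" "g b^2 = 0" "g c^2 = 0" "g d^2 = 0" "g e^2 = 0" by linarith+
      then have gz: "g a = 0" "g b = 0" "g c = 0" "g d = 0" "g e = 0" by simp_all
      define P where "P = [:x 0, x 1, x 2, x 3:]"
      have polyP: "poly P y = g y" for y unfolding P_def g_def by (simp add: algebra_simps power2_eq_square power3_eq_cube)
      have "P = 0"
      proof (rule ccontr)
        assume nz: "P \<noteq> 0"
        have deg: "degree P \<le> 3" unfolding P_def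
          by (auto intro!: degree_le simp: coeff_pCons split: nat.splits)
        have "{a,b,c,d,e} \<subseteq> {y. poly P y = 0}" using gz polyP by auto
        then have "card {a,b,c,d,e} \<le> card {y. poly P y = 0}"
          using poly_roots_finite[OF nz] by (rule card_mono[rotated])
        also have "\<dots> \<le> 3" using card_poly_roots_bound[OF nz] deg by linarith
        finally show False using dist by simp
      qed
      then have "x 0 = 0" "x 1 = 0" "x 2 = 0" "x 3 = 0" unfolding P_def by simp_all
      moreover obtain i where i: "i < 4" "x i \<noteq> 0" using x by blast
      moreover have "i = 0 \<or> i = 1 \<or> i = 2 \<or> i = 3" using i(1) by auto
      ultimately show False by auto
    qed
  qed
  have "\<forall>k<4. piv (HM p q r s t) k > 0" using pd_piv[OF HM_symm pd] .
  then show ?thesis using L_from_piv by blast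
qed


lemma GG_cnj: "GG x (cnj y) = cnj (GG x y)"
  unfolding GG_def by (simp add: eval_nat_numeral)

lemma LnotC:
  assumes A: "isRL p q r s t [complex_of_real a, z, cnj z, w, cnj w]"
  shows "\<not> (L3 p q r s t > 0 \<and> L2 p q r s t > 0 \<and> L1 p q r s t > 0)"
proof
  assume L: "L3 p q r s t > 0 \<and> L2 p q r s t > 0 \<and> L1 p q r s t > 0"
  have pd: "pd (HM p q r s t) 4" using piv_pd[OF HM_symm piv_from_L] L by blast
  let ?A = "complex_of_real a"
  obtain k1 k2 k3 where k: "k1 \<noteq> 0 \<or> k2 \<noteq> 0 \<or> k3 \<noteq> 0"
    "Re (z - ?A) * k1 + Re ((z - ?A)*z) * k2 + Re ((z - ?A)*z^2) * k3 = 0"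
    "Re (w - ?A) * k1 + Re ((w - ?A)*w) * k2 + Re ((w - ?A)*w^2) * k3 = 0"
    using two_eq by blast
  define x where "x = (\<lambda>i::nat. if i = 0 then -a*k1 else if i = 1 then k1 - a*k2 else if i = 2 then k2 - a*k3 else k3)"
  have xnz: "\<exists>i<4. x i \<noteq> 0"
  proof (rule ccontr)
    assume "\<not> ?thesis"
    then have "x 0 = 0" "x 1 = 0" "x 2 = 0" "x 3 = 0" by auto
    then have "k3 = 0" "k2 - a*k3 = 0" "k1 - a*k2 = 0" unfolding x_def by simp_all
    then show False using k(1) by simp
  qed
  have Gf: "GG x y = of_real k1 * (y - ?A) + of_real k2 * ((y - ?A)*y) + of_real k3 * ((y - ?A)*y^2)" for y
    unfolding GG_def x_def by (simp add: eval_nat_numeral; algebra)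
  have Ga: "GG x ?A = 0" unfolding Gf by simp
  have Gz: "Re (GG x z) = 0" unfolding Gf using k(2) by (simp add: mult.commute)
  have Gw: "Re (GG x w) = 0" unfolding Gf using k(3) by (simp add: mult.commute)
  have "of_real (QF (HM p q r s t) 4 x) = GG x ?A^2 + GG x z^2 + GG x (cnj z)^2 + GG x w^2 + GG x (cnj w)^2"
    using QF_roots[OF A] .
  then have "QF (HM p q r s t) 4 x = Re (GG x z^2) + Re (cnj (GG x z)^2) + Re (GG x w^2) + Re (cnj (GG x w)^2)"
    unfolding Ga GG_cnj by (metis Re_complex_of_real plus_complex.sel zero_power2 zero_complex.sel(1) add_0)
  also have "\<dots> = - 2 * (Im (GG x z))^2 - 2 * (Im (GG x w))^2"
    using Gz Gw by (simp add: Re_power2 power2_eq_square)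
  also have "\<dots> \<le> 0" by simp
  finally have "QF (HM p q r s t) 4 x \<le> 0" .
  then show False using pd xnz unfolding pd_def by force
qed


lemma rd_zero: "length xs = 5 \<Longrightarrow> \<not> distinct xs \<Longrightarrow> root_disc xs = 0"
proof -
  assume "length xs = 5" "\<not> distinct xs"
  then obtain a b c d e where xs: "xs = [a,b,c,d,e]" by (auto simp: length_Suc_conv numeral_eq_Suc)
  show ?thesis using \<open>\<not> distinct xs\<close> unfolding xs rd5 by auto
qed

lemma card_RN: "card (RS xs) + card (NS xs) = card (set xs)"
proof -
  have "set xs = RS xs \<union> NS xs" "RS xs \<inter> NS xs = {}" unfolding RS_def NS_def by auto
  then show ?thesis by (metis card_Un_disjoint finite_set finite_Un)
qed

theorem mainTheorem1:
  fixes p q r s t :: real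
  defines "f \<equiv> quintic p q r s t"
      and "D \<equiv> quintic_disc p q r s t"
  shows "(card (real_roots f) = 5 \<longleftrightarrow>
            L3 p q r s t > 0 \<and> L2 p q r s t > 0 \<and> L1 p q r s t > 0 \<and> D > 0)
       \<and> ((card (real_roots f) = 3 \<and> (\<exists>z. Im z \<noteq> 0 \<and> nonreal_roots f = {z, cnj z})) \<longleftrightarrow> D < 0)
       \<and> ((card (real_roots f) = 1 \<and> card (nonreal_roots f) = 4) \<longleftrightarrow>
            D > 0 \<and> (L3 p q r s t \<le> 0 \<or> L2 p q r s t \<le> 0 \<or> L1 p q r s t \<le> 0))"
proof -
  define xs where "xs = quintic_roots p q r s t"
  have A: "isRL p q r s t xs" unfolding xs_def by (rule isRL_SOME)
  have len: "length xs = 5" using isRL_length[OF A] .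
  have Dd: "D = Re (root_disc xs)" unfolding D_def quintic_disc_def xs_def ..
  have cr: "card (real_roots f) = card (RS xs)" unfolding f_def by (rule card_real_roots[OF A])
  have nr: "nonreal_roots f = NS xs" unfolding f_def by (rule nonreal_eq[OF A])
  have RN: "card (RS xs) + card (NS xs) = card (set xs)" by (rule card_RN)
  show ?thesis
  proof (cases "distinct xs")
    case False
    have D0: "D = 0" unfolding Dd using rd_zero[OF len False] by simp
    have "card (set xs) \<noteq> 5" using False len card_distinct by metis
    moreover have "card (set xs) \<le> 5" using len card_length by metis
    ultimately have c4: "card (set xs) < 5" by simp
    have n2: "Im z \<noteq> 0 \<Longrightarrow> card {z, cnj z} = 2" for z using cnj_neq[of z] by auto
    show ?thesis unfolding cr nr D0 using c4 RN n2 by auto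
  next
    case True
    note C = classify[OF A True]
    have common: "root_disc ys = root_disc xs \<and> set ys = set xs \<and> isRL p q r s t ys \<and> distinct ys"
      if "mset ys = mset xs" for ys
      using rd_perm[OF A that] mset_eq_setD[OF that] isRL_perm[OF A that]
        mset_eq_imp_distinct_iff[OF that] True by blast
    from C show ?thesis
    proof (elim disjE exE conjE)
      fix a b c d e assume m: "mset (map complex_of_real [a,b,c,d,e]) = mset xs"
      note cm = common[OF m]
      have dist: "distinct [a,b,c,d,e]" using cm by (simp add: distinct_map)
      have Dp: "D > 0" unfolding Dd using cm discA[OF dist] by simp
      have Lp: "L3 p q r s t > 0 \<and> L2 p q r s t > 0 \<and> L1 p q r s t > 0" using LposA cm dist by blast
      have sx: "set xs = set (map complex_of_real [a,b,c,d,e])" using cm by simp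
      have "RS xs = set (map complex_of_real [a,b,c,d,e])" unfolding RS_def sx by auto
      moreover have "distinct (map complex_of_real [a,b,c,d,e])" using cm by blast
      then have "card (set (map complex_of_real [a,b,c,d,e])) = length (map complex_of_real [a,b,c,d,e])"
        by (rule distinct_card)
      ultimately have R5: "card (RS xs) = 5" by simp
      have N0: "NS xs = {}" unfolding NS_def sx by auto
      have nD: "\<not> D < 0" using Dp by simp
      show ?thesis unfolding cr nr R5 N0 using Dp Lp nD by simp
    next
      fix a b c z assume z: "Im z \<noteq> 0" and m: "mset [complex_of_real a, of_real b, of_real c, z, cnj z] = mset xs"
      note cm = common[OF m]
      have dist: "distinct [a,b,c]" using cm by auto
      have Dn: "D < 0" unfolding Dd using cm discB[OF dist z] by simp
      have sx: "set xs = {complex_of_real a, of_real b, of_real c, z, cnj z}" using cm by simp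
      have R: "RS xs = {of_real a, of_real b, of_real c}" using z unfolding RS_def sx by auto
      have R3: "card (RS xs) = 3" unfolding R using dist by simp
      have N: "NS xs = {z, cnj z}" using z unfolding NS_def sx by auto
      have nD: "\<not> D > 0" using Dn by simp
      have ex: "\<exists>z'. Im z' \<noteq> 0 \<and> NS xs = {z', cnj z'}" using N z by blast
      show ?thesis unfolding cr nr R3 using Dn nD ex by simp
    next
      fix a z w assume zw: "Im z \<noteq> 0" "Im w \<noteq> 0"
        and m: "mset [complex_of_real a, z, cnj z, w, cnj w] = mset xs"
      note cm = common[OF m]
      have ne: "w \<noteq> z" "w \<noteq> cnj z" using cm by auto
      have Dp: "D > 0" unfolding Dd using cm discC[OF zw ne, of a] by simp
      have Ln: "\<not> (L3 p q r s t > 0 \<and> L2 p q r s t > 0 \<and> L1 p q r s t > 0)" using LnotC cm by blast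
      have sx: "set xs = {complex_of_real a, z, cnj z, w, cnj w}" using cm by simp
      have R: "RS xs = {of_real a}" using zw unfolding RS_def sx by auto
      have R1: "card (RS xs) = 1" unfolding R by simp
      have N: "NS xs = {z, cnj z, w, cnj w}" using zw unfolding NS_def sx by auto
      have N4: "card (NS xs) = 4" unfolding N using cm by auto
      have nD: "\<not> D < 0" using Dp by simp
      have Ln': "L3 p q r s t \<le> 0 \<or> L2 p q r s t \<le> 0 \<or> L1 p q r s t \<le> 0" using Ln by auto
      have Ln'': "\<not> (L3 p q r s t > 0 \<and> L2 p q r s t > 0 \<and> L1 p q r s t > 0 \<and> D > 0)" using Ln by auto
      show ?thesis unfolding cr nr R1 N4 using Dp nD Ln' Ln'' by simp
    qed
  qed
qed

end
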